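(* In the setting below, suppose there exist $K\ge 0$ and $R>0$ such that $\mathbb{P}_X(S_r)\le K\,\mathbb{P}_X(B_r)$ for all $r\in(0,R)$. If $x$ is a Lebesgue point for $\eta$ with respect to $\mathbb{P}_X$, then $\mathbb{E}[|\eta(X^x_m)-\eta(x)|]\to 0$ as $m\to\infty$, for any choice of nearest neighbors $X^x_m$ (any tie-breaking).
   Context: Let $(\mathcal{X},d)$ be a metric space with its Borel $\sigma$-algebra, let $(\Omega,\mathcal{F},\mathbb{P})$ be a probability space, and let $X,X_1,X_2,\dots$ be i.i.d. $\mathcal{X}$-valued random variables with common law $\mathbb{P}_X$. For $x\in\mathcal{X}$ and $r>0$ write $B_r=\{x':d(x,x')<r\}$, $\bar B_r=\{x':d(x,x')\le r\}$ and $S_r=\{x':d(x,x')=r\}$. The support of $\mathbb{P}_X$ is the set of $x$ such that $\mathbb{P}_X(\bar B_r(x))>0$ for all $r>0$. Fix $x$ in the support of $\mathbb{P}_X$ and a bounded measurable $\eta:\mathcal{X}\to\mathbb{R}$. For each $m\in\mathbb{N}$, a nearest neighbor of $x$ among $X_1,\dots,X_m$ is a measurable $X^x_m:\Omega\to\mathcal{X}$ with $X^x_m(\omega)\in\arg\min_{x'\in\{X_1(\omega),\dots,X_m(\omega)\}}d(x,x')$ for every $\omega\in\Omega$; fix such a sequence $(X^x_m)_{m\in\mathbb{N}}$. The point $x$ is a Lebesgue point if $\mathbb{E}[\mathbb{I}_{\bar B_r}(X)\,|\eta(X)-\eta(x)|]/\mathbb{P}_X(\bar B_r)\to 0$ as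 $r\to 0^+$. *)

theory Defs
  imports "HOL-Probability.Probability"
begin

definition in_support :: "'a::metric_space measure \<Rightarrow> 'a \<Rightarrow> bool" where
  "in_support P x \<longleftrightarrow> (\<forall>r>0. measure P (cball x r) > 0)"

definition lebesgue_point ::
  "'w measure \<Rightarrow> ('w \<Rightarrow> 'a::metric_space) \<Rightarrow> ('a \<Rightarrow> real) \<Rightarrow> 'a \<Rightarrow> bool" where
  "lebesgue_point M X \<eta> x \<longleftrightarrow>
     ((\<lambda>r. (\<integral>\<omega>. indicator (cball x r) (X \<omega>) * \<bar>\<eta> (X \<omega>) - \<eta> x\<bar> \<partial>M)
            / measure (distr M borel X) (cball x r)) \<longlongrightarrow> 0) (at_right 0)"

definition is_nearest_neighbor ::
  "'w measure \<Rightarrow> (nat \<Rightarrow> 'w \<Rightarrow> 'a::metric_space) \<Rightarrow> 'a \<Rightarrow> nat \<Rightarrow> ('w \<Rightarrow> 'a) \<Rightarrow> bool" where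
  "is_nearest_neighbor M Xs x m N \<longleftrightarrow>
     N \<in> borel_measurable M \<and>
     (\<forall>\<omega>\<in>space M. (\<exists>i\<in>{1..m}. N \<omega> = Xs i \<omega>) \<and>
                    (\<forall>i\<in>{1..m}. dist x (N \<omega>) \<le> dist x (Xs i \<omega>)))"

end

theory Submission imports Defs begin

lemma indep_integral_fubini:
  assumes "prob_space M" "prob_space.indep_var M S X T Y"
    and f: "f \<in> borel_measurable (S \<Otimes>\<^sub>M T)" and bnd: "\<And>z. \<bar>f z\<bar> \<le> (c::real)"
  shows "(\<integral>\<omega>. f (X \<omega>, Y \<omega>) \<partial>M) = (\<integral>t. (\<integral>s. f (s,t) \<partial>distr M S X) \<partial>distr M T Y)"
proof -
  interpret prob_space M by fact
  have rv: "random_variable S X" "random_variable T Y"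
    using assms(2) by (blast dest: indep_var_rv1 indep_var_rv2)+
  have eq: "distr M S X \<Otimes>\<^sub>M distr M T Y = distr M (S \<Otimes>\<^sub>M T) (\<lambda>x. (X x, Y x))"
    using assms(2) indep_var_distribution_eq by blast
  interpret PX: prob_space "distr M S X" by (rule prob_space_distr) (rule rv)
  interpret PY: prob_space "distr M T Y" by (rule prob_space_distr) (rule rv)
  interpret PXY: pair_prob_space "distr M S X" "distr M T Y" ..
  have "(\<integral>\<omega>. f (X \<omega>, Y \<omega>) \<partial>M) = integral\<^sup>L (distr M (S \<Otimes>\<^sub>M T) (\<lambda>x. (X x, Y x))) f"
    by (rule integral_distr[symmetric]) (auto intro: measurable_Pair rv f)
  also have "\<dots> = integral\<^sup>L (distr M S X \<Otimes>\<^sub>M distr M T Y) f" by (simp add: eq)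
  also have "\<dots> = (\<integral>t. (\<integral>s. f (s,t) \<partial>distr M S X) \<partial>distr M T Y)"
  proof -
    have int: "integrable (distr M S X \<Otimes>\<^sub>M distr M T Y) (\<lambda>(s,t). f (s,t))"
      apply (rule finite_measure.integrable_const_bound[where B=c])
      apply (rule PXY.P.finite_measure_axioms)
      using bnd apply simp
      using f by simp
    show ?thesis using PXY.integral_snd[OF int] by (simp add: case_prod_beta')
  qed
  finally show ?thesis .
qed

locale nnset = prob_space M for M :: "'w measure" +
  fixes Xs :: "nat \<Rightarrow> 'w \<Rightarrow> 'a::metric_space" and \<eta> :: "'a \<Rightarrow> real" and x :: 'a
  assumes Xs_meas: "\<And>i. Xs i \<in> borel_measurable M"
    and ind: "indep_vars (\<lambda>_. borel) Xs UNIV"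
    and ident: "\<And>i. distr M borel (Xs i) = distr M borel (Xs 0)"
    and eta_meas: "\<eta> \<in> borel_measurable borel"
    and eta_bdd: "bounded (range \<eta>)"
begin

definition "P = distr M borel (Xs 0)"
definition "h y = \<bar>\<eta> y - \<eta> x\<bar>"
definition "T m i \<omega> = (MIN j\<in>{1..m} - {i}. dist x (Xs j \<omega>))"

lemma P_prob: "prob_space P"
  unfolding P_def by (rule prob_space_distr) (rule Xs_meas)

lemma space_P[simp]: "space P = UNIV" "sets P = sets borel"
  by (simp_all add: P_def)

lemma distr_Xs: "distr M borel (Xs i) = P"
  using ident by (simp add: P_def)

lemma h_meas[measurable]: "h \<in> borel_measurable borel"
  unfolding h_def using eta_meas by measurable

lemma h_nonneg: "0 \<le> h y" by (simp add: h_def)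

lemma h_x[simp]: "h x = 0" by (simp add: h_def)

definition "H = (SOME H. \<forall>y. h y \<le> H)"

lemma h_bdd: "h y \<le> H"
proof -
  obtain B where B: "\<And>y. \<bar>\<eta> y\<bar> \<le> B"
    using eta_bdd unfolding bounded_iff by (auto simp: real_norm_def)
  have "\<forall>y. h y \<le> 2*B"
  proof
    fix y have "h y \<le> \<bar>\<eta> y\<bar> + \<bar>\<eta> x\<bar>" by (simp add: h_def abs_triangle_ineq4)
    then show "h y \<le> 2*B" using B[of y] B[of x] by linarith
  qed
  then have "\<exists>H. \<forall>y. h y \<le> H" by blast
  then show ?thesis unfolding H_def by (rule someI_ex[where P="\<lambda>H. \<forall>y. h y \<le> H", THEN spec])
qed

lemma D_meas[measurable]: "(\<lambda>y. dist x y) \<in> borel_measurable borel"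
  by (intro borel_measurable_continuous_onI continuous_intros)

lemma H_nonneg: "0 \<le> H" using h_nonneg[of x] h_bdd[of x] by simp

lemma sphere_borel[measurable]: "sphere x t \<in> sets borel" unfolding sphere_def by (intro borel_closed closed_Collect_eq continuous_intros)

lemma T_meas[measurable]: "T m i \<in> borel_measurable M"
  unfolding T_def by (intro borel_measurable_Min measurable_compose[OF Xs_meas D_meas]) auto

lemma KL:
  assumes "i \<in> {1..m}"
    and psi: "psi \<in> borel_measurable (borel \<Otimes>\<^sub>M borel)" and bnd: "\<And>z. \<bar>psi z\<bar> \<le> (c::real)"
    and Psi: "\<And>t. Psi t = (\<integral>y. psi (y, t) \<partial>P)" and Psim: "Psi \<in> borel_measurable borel"
  shows "(\<integral>\<omega>. psi (Xs i \<omega>, T m i \<omega>) \<partial>M) = (\<integral>\<omega>. Psi (T m i \<omega>) \<partial>M)"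
proof -
  define J where "J = {1..m} - {i}"
  define RI where "RI \<omega> = restrict (\<lambda>j. Xs j \<omega>) {i}" for \<omega>
  define RJ where "RJ \<omega> = restrict (\<lambda>j. Xs j \<omega>) J" for \<omega>
  define Tm where "Tm v = (MIN j\<in>J. dist x (v j))" for v :: "nat \<Rightarrow> 'a"
  define f where "f uv = psi (fst uv i, Tm (snd uv))" for uv
  have a: "indep_var (PiM {i} (\<lambda>_. borel)) RI (PiM J (\<lambda>_. borel)) RJ"
    unfolding RI_def RJ_def by (rule indep_var_restrict[OF ind]) (auto simp: J_def)
  have m1: "(\<lambda>f. f i) \<in> measurable (PiM {i} (\<lambda>_. borel)) (borel :: 'a measure)"
    by (rule measurable_component_singleton) simp
  have m2[measurable]: "Tm \<in> measurable (PiM J (\<lambda>_. borel)) (borel :: real measure)"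
    proof -
    have "\<And>j. j \<in> J \<Longrightarrow> (\<lambda>v. dist x (v j)) \<in> borel_measurable (PiM J (\<lambda>_. borel))"
      by (rule measurable_compose[OF _ D_meas], rule measurable_component_singleton)
    then show ?thesis unfolding Tm_def by (intro borel_measurable_Min) (auto simp: J_def)
  qed
  have RI_m[measurable]: "RI \<in> measurable M (PiM {i} (\<lambda>_. borel))"
    unfolding RI_def by (intro measurable_restrict) (auto intro: Xs_meas)
  have RJ_m[measurable]: "RJ \<in> measurable M (PiM J (\<lambda>_. borel))"
    unfolding RJ_def by (intro measurable_restrict) (auto intro: Xs_meas)
  have fm: "f \<in> borel_measurable (PiM {i} (\<lambda>_. borel) \<Otimes>\<^sub>M PiM J (\<lambda>_. borel))"
    unfolding f_def
    by (rule measurable_compose[OF _ psi]) (intro measurable_Pair measurable_compose[OF measurable_fst m1] measurable_compose[OF measurable_snd m2])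
  have "(\<integral>\<omega>. psi (Xs i \<omega>, T m i \<omega>) \<partial>M) = (\<integral>\<omega>. f (RI \<omega>, RJ \<omega>) \<partial>M)"
    by (rule Bochner_Integration.integral_cong) (auto simp: f_def RI_def RJ_def Tm_def T_def J_def intro!: arg_cong[where f=psi] arg_cong[where f=Min] image_cong)
  also have "\<dots> = (\<integral>v. (\<integral>u. f (u,v) \<partial>distr M (PiM {i} (\<lambda>_. borel)) RI) \<partial>distr M (PiM J (\<lambda>_. borel)) RJ)"
    by (rule indep_integral_fubini[OF prob_space_axioms a fm]) (use bnd in \<open>auto simp: f_def\<close>)
  also have "\<dots> = (\<integral>v. Psi (Tm v) \<partial>distr M (PiM J (\<lambda>_. borel)) RJ)"
  proof (rule Bochner_Integration.integral_cong[OF refl])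
    fix v
    have "(\<integral>u. f (u,v) \<partial>distr M (PiM {i} (\<lambda>_. borel)) RI) = (\<integral>\<omega>. f (RI \<omega>, v) \<partial>M)"
      using m1 by (intro integral_distr) (auto simp: f_def intro!: measurable_compose[OF _ psi] measurable_Pair)
    also have "\<dots> = (\<integral>\<omega>. psi (Xs i \<omega>, Tm v) \<partial>M)"
      by (simp add: f_def RI_def)
    also have "\<dots> = (\<integral>y. psi (y, Tm v) \<partial>distr M borel (Xs i))"
      by (rule integral_distr[symmetric]) (auto intro!: Xs_meas measurable_compose[OF _ psi] measurable_Pair)
    also have "\<dots> = Psi (Tm v)" by (simp add: distr_Xs Psi)
    finally show "(\<integral>u. f (u,v) \<partial>distr M (PiM {i} (\<lambda>_. borel)) RI) = Psi (Tm v)" .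
  qed
  also have "\<dots> = (\<integral>\<omega>. Psi (Tm (RJ \<omega>)) \<partial>M)"
    by (rule integral_distr) (auto intro!: measurable_compose[OF m2 Psim])
  also have "\<dots> = (\<integral>\<omega>. Psi (T m i \<omega>) \<partial>M)"
    by (rule Bochner_Integration.integral_cong) (auto simp: RJ_def Tm_def T_def J_def intro!: arg_cong[where f=Psi] arg_cong[where f=Min] image_cong)
  finally show ?thesis .
qed

sublocale PP: prob_space P by (rule P_prob)

lemma intM: "f \<in> borel_measurable M \<Longrightarrow> (\<And>\<omega>. \<bar>f \<omega>\<bar> \<le> (c::real)) \<Longrightarrow> integrable M f"
  by (rule finite_measure.integrable_const_bound[where B=c]) (auto intro: finite_measure_axioms)

lemma intP: "f \<in> borel_measurable borel \<Longrightarrow> (\<And>y. \<bar>f y\<bar> \<le> (c::real)) \<Longrightarrow> integrable P f"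
proof -
  have "borel_measurable P = borel_measurable borel" by (rule measurable_cong_sets) simp_all
  then show "f \<in> borel_measurable borel \<Longrightarrow> (\<And>y. \<bar>f y\<bar> \<le> (c::real)) \<Longrightarrow> integrable P f"
    by (intro finite_measure.integrable_const_bound[where B=c]) (auto intro: PP.finite_measure_axioms)
qed

definition "F t = measure P (cball x t)"
definition "G t = measure P (ball x t)"
definition "g t = (\<integral>y. (if dist x y \<le> t then h y else 0) \<partial>P)"

lemma cball_ind: "(\<lambda>y. if dist x y \<le> t then 1 else 0::real) = indicator (cball x t)"
  by (auto simp: fun_eq_iff indicator_def)
lemma ball_ind: "(\<lambda>y. if dist x y < t then 1 else 0::real) = indicator (ball x t)"
  by (auto simp: fun_eq_iff indicator_def)
lemma sphere_ind: "(\<lambda>y. if dist x y = t then 1 else 0::real) = indicator (sphere x t)"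
  by (auto simp: fun_eq_iff indicator_def)

lemma F_int: "(\<integral>y. (if dist x y \<le> t then 1 else 0::real) \<partial>P) = F t"
  unfolding cball_ind F_def by simp
lemma G_int: "(\<integral>y. (if dist x y < t then 1 else 0::real) \<partial>P) = G t"
  unfolding ball_ind G_def by simp
lemma S_int: "(\<integral>y. (if dist x y = t then 1 else 0::real) \<partial>P) = measure P (sphere x t)"
  unfolding sphere_ind by simp

lemma F_mono: "mono F"
  unfolding F_def mono_def by (intro allI impI PP.finite_measure_mono) auto
lemma G_mono: "mono G"
  unfolding G_def mono_def by (intro allI impI PP.finite_measure_mono) auto
lemma g_mono: "mono g"
  unfolding g_def mono_def
  by (intro allI impI integral_mono intP[where c=H]) (auto simp: h_nonneg h_bdd abs_of_nonneg H_nonneg)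
lemma F_meas[measurable]: "F \<in> borel_measurable borel" by (rule borel_measurable_mono[OF F_mono])
lemma G_meas[measurable]: "G \<in> borel_measurable borel" by (rule borel_measurable_mono[OF G_mono])
lemma g_meas[measurable]: "g \<in> borel_measurable borel" by (rule borel_measurable_mono[OF g_mono])

lemma sphere_FG: "measure P (sphere x t) = F t - G t"
proof -
  have "cball x t = ball x t \<union> sphere x t" "ball x t \<inter> sphere x t = {}" by auto
  moreover have "measure P (ball x t \<union> sphere x t) = measure P (ball x t) + measure P (sphere x t)"
    by (rule PP.finite_measure_Union) auto
  ultimately have "F t = G t + measure P (sphere x t)" unfolding F_def G_def by simp
  then show ?thesis by simp
qed

definition "psi1 z = (if dist x (fst z) \<le> snd z then h (fst z) else 0)"
definition "psi2 z = (if dist x (fst z) \<le> snd z \<and> 0 < snd z then 1 else (0::real))"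
definition "psi3 R z = (if dist x (fst z) = snd z \<and> 0 < snd z \<and> snd z < R then 1 else (0::real))"
definition "psi4 z = (if dist x (fst z) < snd z then 1 else (0::real))"

lemma psi_meas[measurable]:
  "psi1 \<in> borel_measurable (borel \<Otimes>\<^sub>M borel)" "psi2 \<in> borel_measurable (borel \<Otimes>\<^sub>M borel)"
  "psi3 R \<in> borel_measurable (borel \<Otimes>\<^sub>M borel)" "psi4 \<in> borel_measurable (borel \<Otimes>\<^sub>M borel)"
  unfolding psi1_def psi2_def psi3_def psi4_def by measurable

lemmas Xs_meas'[measurable] = Xs_meas

lemma psi_bnd: "\<bar>psi1 z\<bar> \<le> H" "\<bar>psi2 z\<bar> \<le> 1" "\<bar>psi3 R z\<bar> \<le> 1" "\<bar>psi4 z\<bar> \<le> 1"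
  by (auto simp: psi1_def psi2_def psi3_def psi4_def h_nonneg h_bdd H_nonneg abs_of_nonneg)

lemma Psi1: "g t = (\<integral>y. psi1 (y, t) \<partial>P)" unfolding g_def psi1_def fst_conv snd_conv by simp
lemma Psi2: "(if 0 < t then F t else 0) = (\<integral>y. psi2 (y, t) \<partial>P)"
  by (simp add: psi2_def F_int[symmetric])
lemma Psi3: "(if 0 < t \<and> t < R then F t - G t else 0) = (\<integral>y. psi3 R (y, t) \<partial>P)"
  by (cases "0 < t \<and> t < R") (auto simp: psi3_def S_int[symmetric] sphere_FG[symmetric])
lemma Psi4: "G t = (\<integral>y. psi4 (y, t) \<partial>P)"
  by (simp add: psi4_def G_int)

lemma g_nonpos: "t \<le> 0 \<Longrightarrow> g t = 0"
proof -
  assume "t \<le> 0"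
  then have "(\<lambda>y. if dist x y \<le> t then h y else 0) = (\<lambda>y. 0)"
    by (auto simp: fun_eq_iff) (metis dist_le_zero_iff h_x order_trans)
  then show ?thesis by (simp add: g_def)
qed

lemma g_le_H: "g t \<le> H"
proof -
  have "g t \<le> (\<integral>y. H \<partial>P)" unfolding g_def
    by (intro integral_mono intP[where c=H]) (auto simp: h_nonneg h_bdd abs_of_nonneg H_nonneg)
  then show ?thesis using PP.prob_space by simp
qed

lemma g_nonneg: "0 \<le> g t"
  unfolding g_def by (intro Bochner_Integration.integral_nonneg) (auto simp: h_nonneg)

lemma per_i:
  assumes i: "i \<in> {1..m}" and eps: "0 \<le> eps" and r: "0 < r"
    and gle: "\<And>t. 0 < t \<Longrightarrow> t \<le> r \<Longrightarrow> g t \<le> eps * F t"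
    and K: "0 \<le> K" and sph: "\<And>t. 0 < t \<Longrightarrow> t < R \<Longrightarrow> measure P (sphere x t) \<le> K * G t"
  shows "(\<integral>\<omega>. psi1 (Xs i \<omega>, T m i \<omega>) \<partial>M) \<le>
     eps * (1 + K) * (\<integral>\<omega>. psi4 (Xs i \<omega>, T m i \<omega>) \<partial>M)
     + eps * (\<integral>\<omega>. (if R \<le> T m i \<omega> then 1 else 0) \<partial>M)
     + H * (\<integral>\<omega>. (if r < T m i \<omega> then 1 else 0) \<partial>M)"
proof -
  let ?T = "T m i"
  define Psi2 where "Psi2 t = (if 0 < t then F t else 0)" for t
  define Psi3 where "Psi3 t = (if 0 < t \<and> t < R then F t - G t else 0)" for t
  have [measurable]: "Psi2 \<in> borel_measurable borel" "Psi3 \<in> borel_measurable borel"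
    unfolding Psi2_def Psi3_def by measurable
  have e1: "(\<integral>\<omega>. psi1 (Xs i \<omega>, ?T \<omega>) \<partial>M) = (\<integral>\<omega>. g (?T \<omega>) \<partial>M)"
    by (rule KL[OF i psi_meas(1) psi_bnd(1) Psi1 g_meas])
  have e2: "(\<integral>\<omega>. psi2 (Xs i \<omega>, ?T \<omega>) \<partial>M) = (\<integral>\<omega>. Psi2 (?T \<omega>) \<partial>M)"
    by (rule KL[OF i psi_meas(2) psi_bnd(2)]) (auto simp: Psi2_def Psi2[symmetric])
  have e3: "(\<integral>\<omega>. psi3 R (Xs i \<omega>, ?T \<omega>) \<partial>M) = (\<integral>\<omega>. Psi3 (?T \<omega>) \<partial>M)"
    by (rule KL[OF i psi_meas(3) psi_bnd(3)]) (auto simp: Psi3_def Psi3[symmetric])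
  have e4: "(\<integral>\<omega>. psi4 (Xs i \<omega>, ?T \<omega>) \<partial>M) = (\<integral>\<omega>. G (?T \<omega>) \<partial>M)"
    by (rule KL[OF i psi_meas(4) psi_bnd(4) Psi4 G_meas])
  have F_le1: "F t \<le> 1" for t unfolding F_def by simp
  have G_le1: "G t \<le> 1" for t unfolding G_def by simp
  have FG: "G t \<le> F t" for t unfolding F_def G_def by (intro PP.finite_measure_mono) auto
  have i1: "(\<integral>\<omega>. g (?T \<omega>) \<partial>M) \<le> (\<integral>\<omega>. eps * Psi2 (?T \<omega>) + H * (if r < ?T \<omega> then 1 else 0) \<partial>M)"
  proof (rule integral_mono)
    show "integrable M (\<lambda>\<omega>. g (?T \<omega>))"
      by (rule intM[where c=H]) (auto simp: g_nonneg g_le_H)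
    show "integrable M (\<lambda>\<omega>. eps * Psi2 (?T \<omega>) + H * (if r < ?T \<omega> then 1 else 0))"
    proof (rule intM[where c="eps + H"])
      fix \<omega>
      have a: "0 \<le> Psi2 t" "Psi2 t \<le> 1" for t by (auto simp: Psi2_def F_le1 F_def)
      have "eps * Psi2 (?T \<omega>) \<le> eps" using mult_left_mono[OF a(2) eps] by simp
      moreover have "0 \<le> eps * Psi2 (?T \<omega>)" using a(1) eps by simp
      ultimately show "\<bar>eps * Psi2 (?T \<omega>) + H * (if r < ?T \<omega> then 1 else 0)\<bar> \<le> eps + H"
        using H_nonneg by auto
    qed simp
    fix \<omega>
    let ?t = "?T \<omega>"
    show "g ?t \<le> eps * Psi2 ?t + H * (if r < ?t then 1 else 0)"
    proof (cases "?t \<le> 0")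
      case True then show ?thesis using eps H_nonneg
        by (simp add: g_nonpos Psi2_def)
    next
      case False
      show ?thesis
      proof (cases "?t \<le> r")
        case True then show ?thesis using False gle[of ?t] H_nonneg by (simp add: Psi2_def)
      next
        case False2: False
        have "0 \<le> eps * Psi2 ?t" using eps False by (simp add: Psi2_def F_def)
        then show ?thesis using False2 g_le_H[of ?t] by simp
      qed
    qed
  qed
  also have "\<dots> = eps * (\<integral>\<omega>. Psi2 (?T \<omega>) \<partial>M) + H * (\<integral>\<omega>. (if r < ?T \<omega> then 1 else 0) \<partial>M)"
  proof -
    have "integrable M (\<lambda>\<omega>. Psi2 (?T \<omega>))"
      by (rule intM[where c=1]) (auto simp: Psi2_def F_le1 F_def)
    moreover have "integrable M (\<lambda>\<omega>. (if r < ?T \<omega> then 1 else 0::real))"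
      by (rule intM[where c=1]) auto
    ultimately show ?thesis by simp
  qed
  finally have i2: "(\<integral>\<omega>. g (?T \<omega>) \<partial>M) \<le> eps * (\<integral>\<omega>. Psi2 (?T \<omega>) \<partial>M) + H * (\<integral>\<omega>. (if r < ?T \<omega> then 1 else 0) \<partial>M)" .
  have Psi2b: "(\<integral>\<omega>. Psi2 (?T \<omega>) \<partial>M) \<le> (1 + K) * (\<integral>\<omega>. psi4 (Xs i \<omega>, ?T \<omega>) \<partial>M) + (\<integral>\<omega>. (if R \<le> ?T \<omega> then 1 else 0) \<partial>M)"
  proof -
    have I4: "integrable M (\<lambda>\<omega>. psi4 (Xs i \<omega>, ?T \<omega>))" by (rule intM[where c=1]) (auto simp: psi_bnd)
    have I3: "integrable M (\<lambda>\<omega>. psi3 R (Xs i \<omega>, ?T \<omega>))" by (rule intM[where c=1]) (auto simp: psi_bnd)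
    have IR: "integrable M (\<lambda>\<omega>. (if R \<le> ?T \<omega> then 1 else 0::real))" by (rule intM[where c=1]) auto
    have "(\<integral>\<omega>. Psi2 (?T \<omega>) \<partial>M) = (\<integral>\<omega>. psi2 (Xs i \<omega>, ?T \<omega>) \<partial>M)" using e2 by simp
    also have "\<dots> \<le> (\<integral>\<omega>. psi4 (Xs i \<omega>, ?T \<omega>) + psi3 R (Xs i \<omega>, ?T \<omega>) + (if R \<le> ?T \<omega> then 1 else 0) \<partial>M)"
    proof (rule integral_mono)
      show "integrable M (\<lambda>\<omega>. psi2 (Xs i \<omega>, ?T \<omega>))" by (rule intM[where c=1]) (auto simp: psi_bnd)
      show "integrable M (\<lambda>\<omega>. psi4 (Xs i \<omega>, ?T \<omega>) + psi3 R (Xs i \<omega>, ?T \<omega>) + (if R \<le> ?T \<omega> then 1 else 0))"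
        using I4 I3 IR by simp
      fix \<omega> show "psi2 (Xs i \<omega>, ?T \<omega>) \<le> psi4 (Xs i \<omega>, ?T \<omega>) + psi3 R (Xs i \<omega>, ?T \<omega>) + (if R \<le> ?T \<omega> then 1 else 0)"
        by (auto simp: psi2_def psi3_def psi4_def)
    qed
    also have "\<dots> = (\<integral>\<omega>. psi4 (Xs i \<omega>, ?T \<omega>) \<partial>M) + (\<integral>\<omega>. psi3 R (Xs i \<omega>, ?T \<omega>) \<partial>M) + (\<integral>\<omega>. (if R \<le> ?T \<omega> then 1 else 0) \<partial>M)"
      using I4 I3 IR by simp
    also have "(\<integral>\<omega>. psi3 R (Xs i \<omega>, ?T \<omega>) \<partial>M) \<le> K * (\<integral>\<omega>. psi4 (Xs i \<omega>, ?T \<omega>) \<partial>M)"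
    proof -
      have "(\<integral>\<omega>. psi3 R (Xs i \<omega>, ?T \<omega>) \<partial>M) = (\<integral>\<omega>. Psi3 (?T \<omega>) \<partial>M)" by (rule e3)
      also have "\<dots> \<le> (\<integral>\<omega>. K * G (?T \<omega>) \<partial>M)"
      proof (rule integral_mono)
        show "integrable M (\<lambda>\<omega>. Psi3 (?T \<omega>))"
        proof (rule intM[where c=1])
          fix \<omega>
          have "0 \<le> G (?T \<omega>)" unfolding G_def by simp
          then show "\<bar>Psi3 (?T \<omega>)\<bar> \<le> 1" unfolding Psi3_def
            using FG[of "?T \<omega>"] F_le1[of "?T \<omega>"] by auto
        qed simp
        show "integrable M (\<lambda>\<omega>. K * G (?T \<omega>))"
        proof (rule intM[where c=K])
          fix \<omega>
          have "0 \<le> G (?T \<omega>)" unfolding G_def by simp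
          then show "\<bar>K * G (?T \<omega>)\<bar> \<le> K"
            using mult_left_mono[OF G_le1[of "?T \<omega>"] K] K by (simp add: abs_mult)
        qed simp
        fix \<omega> show "Psi3 (?T \<omega>) \<le> K * G (?T \<omega>)"
          using sph[of "?T \<omega>"] K by (auto simp: Psi3_def sphere_FG G_def)
      qed
      also have "\<dots> = K * (\<integral>\<omega>. psi4 (Xs i \<omega>, ?T \<omega>) \<partial>M)" using e4 by simp
      finally show ?thesis .
    qed
    finally show ?thesis by (simp add: algebra_simps)
  qed
  have i3: "eps * (\<integral>\<omega>. Psi2 (?T \<omega>) \<partial>M) \<le> eps * ((1 + K) * (\<integral>\<omega>. psi4 (Xs i \<omega>, ?T \<omega>) \<partial>M) + (\<integral>\<omega>. (if R \<le> ?T \<omega> then 1 else 0) \<partial>M))"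
    using Psi2b eps by (rule mult_left_mono)
  show ?thesis using e1 i2 i3 by (simp add: algebra_simps)
qed

lemma J_facts: assumes "i \<in> {1..m}" "2 \<le> m"
  shows "finite ({1..m} - {i})" "{1..m} - {i} \<noteq> {}" "card ({1..m} - {i}) = m - 1"
proof -
  show "finite ({1..m} - {i})" by simp
  show "card ({1..m} - {i}) = m - 1" using assms by (simp add: card_Diff_singleton)
  have "(if i = 1 then 2 else 1) \<in> {1..m} - {i}" using assms by auto
  then show "{1..m} - {i} \<noteq> {}" by blast
qed

lemma prob_all:
  assumes J: "finite J" "J \<noteq> {}" and A: "A \<in> sets borel"
  shows "(\<integral>\<omega>. (if \<forall>j\<in>J. Xs j \<omega> \<in> A then 1 else 0) \<partial>M) = (measure P A) ^ card J"
proof -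
  have "(\<integral>\<omega>. (if \<forall>j\<in>J. Xs j \<omega> \<in> A then 1 else 0) \<partial>M) = (\<integral>\<omega>. indicator (\<Inter>j\<in>J. Xs j -` A \<inter> space M) \<omega> \<partial>M)"
    by (rule Bochner_Integration.integral_cong) (use J in \<open>auto simp: indicator_def\<close>)
  also have "\<dots> = prob (\<Inter>j\<in>J. Xs j -` A \<inter> space M)"
  proof -
    have "(\<Inter>j\<in>J. Xs j -` A \<inter> space M) \<subseteq> space M" using J by auto
    then show ?thesis by (simp add: Int_absorb2)
  qed
  also have "\<dots> = (\<Prod>j\<in>J. prob (Xs j -` A \<inter> space M))"
    by (rule indep_varsD[OF ind]) (use J A in auto)
  also have "\<dots> = (\<Prod>j\<in>J. measure P A)"
  proof (rule prod.cong[OF refl])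
    fix j have "measure P A = measure (distr M borel (Xs j)) A" by (simp add: distr_Xs)
    also have "\<dots> = prob (Xs j -` A \<inter> space M)" using A by (simp add: measure_distr)
    finally show "prob (Xs j -` A \<inter> space M) = measure P A" by simp
  qed
  finally show ?thesis by simp
qed

lemma prob_TR:
  assumes "i \<in> {1..m}" "2 \<le> m"
  shows "(\<integral>\<omega>. (if R \<le> T m i \<omega> then 1 else 0) \<partial>M) = (measure P {y. R \<le> dist x y}) ^ (m - 1)"
proof -
  note J = J_facts[OF assms]
  have "(\<integral>\<omega>. (if R \<le> T m i \<omega> then 1 else 0) \<partial>M) = (\<integral>\<omega>. (if \<forall>j\<in>{1..m} - {i}. Xs j \<omega> \<in> {y. R \<le> dist x y} then 1 else 0) \<partial>M)"
    using J by (intro Bochner_Integration.integral_cong refl) (auto simp: T_def)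
  also have "\<dots> = (measure P {y. R \<le> dist x y}) ^ (m - 1)"
    by (subst prob_all) (use J in \<open>auto intro!: borel_closed closed_Collect_le continuous_intros\<close>)
  finally show ?thesis .
qed

lemma prob_Tr:
  assumes "i \<in> {1..m}" "2 \<le> m"
  shows "(\<integral>\<omega>. (if r < T m i \<omega> then 1 else 0) \<partial>M) = (measure P {y. r < dist x y}) ^ (m - 1)"
proof -
  note J = J_facts[OF assms]
  have "(\<integral>\<omega>. (if r < T m i \<omega> then 1 else 0) \<partial>M) = (\<integral>\<omega>. (if \<forall>j\<in>{1..m} - {i}. Xs j \<omega> \<in> {y. r < dist x y} then 1 else 0) \<partial>M)"
    using J by (intro Bochner_Integration.integral_cong refl) (auto simp: T_def)
  also have "\<dots> = (measure P {y. r < dist x y}) ^ (m - 1)"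
    by (subst prob_all) (use J in \<open>auto intro!: borel_open open_Collect_less continuous_intros\<close>)
  finally show ?thesis .
qed

lemma sum_psi4_le1:
  assumes "2 \<le> m"
  shows "(\<Sum>i\<in>{1..m}. psi4 (Xs i \<omega>, T m i \<omega>)) \<le> 1"
proof -
  define S where "S = {i\<in>{1..m}. dist x (Xs i \<omega>) < T m i \<omega>}"
  have card: "card S \<le> 1"
  proof -
    have "\<forall>a\<in>S. \<forall>b\<in>S. a = b"
    proof (intro ballI, rule ccontr)
      fix a b assume a: "a \<in> S" and b: "b \<in> S" and ab: "a \<noteq> b"
      have "T m a \<omega> \<le> dist x (Xs b \<omega>)" unfolding T_def using b ab by (intro Min_le) (auto simp: S_def)
      moreover have "T m b \<omega> \<le> dist x (Xs a \<omega>)" unfolding T_def using a ab by (intro Min_le) (auto simp: S_def)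
      ultimately show False using a b by (auto simp: S_def)
    qed
    moreover have "finite S" by (simp add: S_def)
    ultimately have "card S \<le> Suc 0" using card_le_Suc0_iff_eq by blast
    then show ?thesis by simp
  qed
  have "(\<Sum>i\<in>{1..m}. psi4 (Xs i \<omega>, T m i \<omega>)) = (\<Sum>i\<in>S. psi4 (Xs i \<omega>, T m i \<omega>)) + (\<Sum>i\<in>{1..m} - S. psi4 (Xs i \<omega>, T m i \<omega>))"
  proof -
    have "S \<subseteq> {1..m}" by (auto simp: S_def)
    from sum.subset_diff[OF this, of "\<lambda>i. psi4 (Xs i \<omega>, T m i \<omega>)"] show ?thesis by (simp add: add.commute)
  qed
  also have "(\<Sum>i\<in>{1..m} - S. psi4 (Xs i \<omega>, T m i \<omega>)) = 0"
    by (rule sum.neutral) (auto simp: S_def psi4_def)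
  also have "(\<Sum>i\<in>S. psi4 (Xs i \<omega>, T m i \<omega>)) = real (card S)"
    by (simp add: S_def psi4_def)
  finally show ?thesis using card by simp
qed

lemma pointwise:
  assumes "2 \<le> m" "k \<in> {1..m}" "\<And>i. i \<in> {1..m} \<Longrightarrow> dist x (Xs k \<omega>) \<le> dist x (Xs i \<omega>)"
  shows "h (Xs k \<omega>) \<le> (\<Sum>i\<in>{1..m}. psi1 (Xs i \<omega>, T m i \<omega>))"
proof -
  note J = J_facts[OF assms(2,1)]
  have "dist x (Xs k \<omega>) \<le> T m k \<omega>" unfolding T_def using J assms(3)
    by (subst Min_ge_iff) auto
  then have "h (Xs k \<omega>) = psi1 (Xs k \<omega>, T m k \<omega>)" by (simp add: psi1_def)
  also have "\<dots> \<le> (\<Sum>i\<in>{1..m}. psi1 (Xs i \<omega>, T m i \<omega>))"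
    by (rule member_le_sum) (use assms(2) in \<open>auto simp: psi1_def h_nonneg\<close>)
  finally show ?thesis .
qed

lemma total_bound:
  assumes m: "2 \<le> m" and N: "N \<in> borel_measurable M"
    and Nmin: "\<And>\<omega>. \<omega> \<in> space M \<Longrightarrow> \<exists>k\<in>{1..m}. N \<omega> = Xs k \<omega> \<and> (\<forall>i\<in>{1..m}. dist x (N \<omega>) \<le> dist x (Xs i \<omega>))"
    and eps: "0 \<le> eps" and r: "0 < r"
    and gle: "\<And>t. 0 < t \<Longrightarrow> t \<le> r \<Longrightarrow> g t \<le> eps * F t"
    and K: "0 \<le> K" and sph: "\<And>t. 0 < t \<Longrightarrow> t < R \<Longrightarrow> measure P (sphere x t) \<le> K * G t"
  shows "(\<integral>\<omega>. h (N \<omega>) \<partial>M) \<le> eps * (1 + K) + eps * m * (measure P {y. R \<le> dist x y}) ^ (m - 1)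
          + H * m * (measure P {y. r < dist x y}) ^ (m - 1)"
proof -
  let ?qR = "(measure P {y. R \<le> dist x y}) ^ (m - 1)"
  let ?qr = "(measure P {y. r < dist x y}) ^ (m - 1)"
  have I1: "integrable M (\<lambda>\<omega>. psi1 (Xs i \<omega>, T m i \<omega>))" for i
    by (rule intM[where c=H]) (auto simp: psi_bnd)
  have I4: "integrable M (\<lambda>\<omega>. psi4 (Xs i \<omega>, T m i \<omega>))" for i
    by (rule intM[where c=1]) (auto simp: psi_bnd)
  have "(\<integral>\<omega>. h (N \<omega>) \<partial>M) \<le> (\<integral>\<omega>. (\<Sum>i\<in>{1..m}. psi1 (Xs i \<omega>, T m i \<omega>)) \<partial>M)"
  proof (rule integral_mono)
    show "integrable M (\<lambda>\<omega>. h (N \<omega>))"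
      by (rule intM[where c=H]) (auto simp: h_nonneg h_bdd intro: measurable_compose[OF N h_meas])
    show "integrable M (\<lambda>\<omega>. \<Sum>i\<in>{1..m}. psi1 (Xs i \<omega>, T m i \<omega>))" using I1 by simp
    fix \<omega> assume "\<omega> \<in> space M"
    from Nmin[OF this] obtain k where k: "k \<in> {1..m}" "N \<omega> = Xs k \<omega>"
      "\<And>i. i\<in>{1..m} \<Longrightarrow> dist x (N \<omega>) \<le> dist x (Xs i \<omega>)" by blast
    show "h (N \<omega>) \<le> (\<Sum>i\<in>{1..m}. psi1 (Xs i \<omega>, T m i \<omega>))"
      using pointwise[OF m k(1), of \<omega>] k by simp
  qed
  also have "\<dots> = (\<Sum>i\<in>{1..m}. (\<integral>\<omega>. psi1 (Xs i \<omega>, T m i \<omega>) \<partial>M))"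
    by (rule Bochner_Integration.integral_sum[where f="\<lambda>i \<omega>. psi1 (Xs i \<omega>, T m i \<omega>)"]) (use I1 in auto)
  also have "\<dots> \<le> (\<Sum>i\<in>{1..m}. eps * (1 + K) * (\<integral>\<omega>. psi4 (Xs i \<omega>, T m i \<omega>) \<partial>M) + eps * ?qR + H * ?qr)"
  proof (rule sum_mono)
    fix i assume i: "i \<in> {1..m}"
    show "(\<integral>\<omega>. psi1 (Xs i \<omega>, T m i \<omega>) \<partial>M) \<le> eps * (1 + K) * (\<integral>\<omega>. psi4 (Xs i \<omega>, T m i \<omega>) \<partial>M) + eps * ?qR + H * ?qr"
      using per_i[OF i eps r gle K sph] prob_TR[OF i m] prob_Tr[OF i m] by simp
  qed
  also have "\<dots> = eps * (1 + K) * (\<Sum>i\<in>{1..m}. (\<integral>\<omega>. psi4 (Xs i \<omega>, T m i \<omega>) \<partial>M)) + eps * m * ?qR + H * m * ?qr"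
    by (simp add: sum.distrib sum_distrib_left)
  also have "(\<Sum>i\<in>{1..m}. (\<integral>\<omega>. psi4 (Xs i \<omega>, T m i \<omega>) \<partial>M)) \<le> 1"
  proof -
    have "(\<Sum>i\<in>{1..m}. (\<integral>\<omega>. psi4 (Xs i \<omega>, T m i \<omega>) \<partial>M)) = (\<integral>\<omega>. (\<Sum>i\<in>{1..m}. psi4 (Xs i \<omega>, T m i \<omega>)) \<partial>M)"
      by (rule Bochner_Integration.integral_sum[where f="\<lambda>i \<omega>. psi4 (Xs i \<omega>, T m i \<omega>)", symmetric]) (use I4 in auto)
    also have "\<dots> \<le> (\<integral>\<omega>. 1 \<partial>M)"
      by (rule integral_mono) (use I4 sum_psi4_le1[OF m] in auto)
    finally show ?thesis using prob_space by simp
  qed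
  then have "eps * (1 + K) * (\<Sum>i\<in>{1..m}. (\<integral>\<omega>. psi4 (Xs i \<omega>, T m i \<omega>) \<partial>M)) \<le> eps * (1 + K)"
    using eps K by (simp add: mult_left_le)
  finally show ?thesis by simp
qed

end

lemma n_pow_lim: assumes "0 \<le> q" "q < (1::real)" shows "(\<lambda>m. real m * q ^ (m - 1)) \<longlonglongrightarrow> 0"
proof -
  have a: "(\<lambda>n. real n * q ^ n) \<longlonglongrightarrow> 0" by (rule powser_times_n_limit_0) (use assms in simp)
  have b: "(\<lambda>n. q ^ n) \<longlonglongrightarrow> 0" by (rule LIMSEQ_power_zero) (use assms in simp)
  have "(\<lambda>n. real n * q ^ n + q ^ n) \<longlonglongrightarrow> 0 + 0" by (rule tendsto_add[OF a b])
  then have "(\<lambda>n. real (Suc n) * q ^ (Suc n - 1)) \<longlonglongrightarrow> 0" by (simp add: algebra_simps)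
  then show ?thesis by (rule LIMSEQ_imp_Suc)
qed

theorem mainTheorem8:
  fixes M :: "'w measure" and Xs :: "nat \<Rightarrow> 'w \<Rightarrow> 'a::metric_space"
    and \<eta> :: "'a \<Rightarrow> real" and x :: 'a and NN :: "nat \<Rightarrow> 'w \<Rightarrow> 'a"
  assumes "prob_space M"
    and "\<And>i. Xs i \<in> borel_measurable M"
    and "prob_space.indep_vars M (\<lambda>_. borel) Xs UNIV"
    and "\<And>i. distr M borel (Xs i) = distr M borel (Xs 0)"
    and "\<eta> \<in> borel_measurable borel"
    and "bounded (range \<eta>)"
    and "in_support (distr M borel (Xs 0)) x"
    and "\<And>m. m \<ge> 1 \<Longrightarrow> is_nearest_neighbor M Xs x m (NN m)"
    and "\<exists>K\<ge>0. \<exists>R>0. \<forall>r\<in>{0<..<R}.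
           measure (distr M borel (Xs 0)) (sphere x r) \<le> K * measure (distr M borel (Xs 0)) (ball x r)"
    and "lebesgue_point M (Xs 0) \<eta> x"
  shows "(\<lambda>m. \<integral>\<omega>. \<bar>\<eta> (NN m \<omega>) - \<eta> x\<bar> \<partial>M) \<longlonglongrightarrow> 0"
proof -
  interpret nnset M Xs \<eta> x
    using assms(1-6) by (simp add: nnset_def nnset_axioms_def)
  obtain K R where K: "0 \<le> K" and R: "0 < R"
    and sph: "\<And>t. 0 < t \<Longrightarrow> t < R \<Longrightarrow> measure P (sphere x t) \<le> K * G t"
    using assms(9) unfolding P_def[symmetric] G_def by auto
  have Fpos: "0 < F t" if "0 < t" for t
    using assms(7) that unfolding in_support_def P_def[symmetric] F_def by auto
  have gF: "((\<lambda>t. g t / F t) \<longlongrightarrow> 0) (at_right 0)"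
  proof -
    have "(\<integral>\<omega>. indicator (cball x t) (Xs 0 \<omega>) * \<bar>\<eta> (Xs 0 \<omega>) - \<eta> x\<bar> \<partial>M) = g t" for t
    proof -
      have "(\<integral>\<omega>. indicator (cball x t) (Xs 0 \<omega>) * \<bar>\<eta> (Xs 0 \<omega>) - \<eta> x\<bar> \<partial>M)
          = (\<integral>\<omega>. indicator (cball x t) (Xs 0 \<omega>) * h (Xs 0 \<omega>) \<partial>M)" by (simp add: h_def)
      also have "\<dots> = (\<integral>y. indicator (cball x t) y * h y \<partial>distr M borel (Xs 0))"
        by (rule integral_distr[symmetric]) (auto intro!: borel_measurable_times borel_measurable_indicator h_meas Xs_meas)
      also have "\<dots> = g t" unfolding g_def P_def
        by (rule Bochner_Integration.integral_cong) (auto simp: indicator_def)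
      finally show ?thesis .
    qed
    then show ?thesis using assms(10) unfolding lebesgue_point_def P_def[symmetric] F_def[symmetric]
      by simp
  qed
  have H0: "0 \<le> H" by (rule H_nonneg)
  show ?thesis
  proof (rule LIMSEQ_I)
    fix e :: real assume e: "0 < e"
    define eps where "eps = e / (K + 4)"
    have eps: "0 < eps" using e K by (simp add: eps_def)
    have eps_e: "eps * (K + 3) < e"
    proof -
      have "eps * (K + 4) = e" using K by (simp add: eps_def)
      then show ?thesis using eps by (simp add: algebra_simps)
    qed
    have "\<forall>\<^sub>F t in at_right 0. g t / F t < eps" by (rule order_tendstoD(2)[OF gF eps])
    then obtain b where b: "0 < b" "\<And>t. 0 < t \<Longrightarrow> t < b \<Longrightarrow> g t / F t < eps"
      unfolding eventually_at_right_field by auto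
    define r where "r = b / 2"
    have r: "0 < r" using b by (simp add: r_def)
    have gle: "g t \<le> eps * F t" if "0 < t" "t \<le> r" for t
    proof -
      have "g t / F t < eps" using b(2)[of t] that b by (simp add: r_def)
      then show ?thesis using Fpos[OF that(1)] by (simp add: pos_divide_less_eq)
    qed
    define qR where "qR = measure P {y. R \<le> dist x y}"
    define qr where "qr = measure P {y. r < dist x y}"
    have qR: "0 \<le> qR" "qR < 1"
    proof -
      show "0 \<le> qR" by (simp add: qR_def)
      have "{y. R \<le> dist x y} = space P - ball x R" by auto
      then have "qR = 1 - G R" unfolding qR_def G_def using PP.prob_compl[of "ball x R"] by simp
      moreover have "F (R/2) \<le> G R" unfolding F_def G_def by (rule PP.finite_measure_mono) (use R in auto)
      ultimately show "qR < 1" using Fpos[of "R/2"] R by simp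
    qed
    have qr: "0 \<le> qr" "qr < 1"
    proof -
      show "0 \<le> qr" by (simp add: qr_def)
      have "{y. r < dist x y} = space P - cball x r" by auto
      then have "qr = 1 - F r" unfolding qr_def F_def using PP.prob_compl[of "cball x r"] by simp
      then show "qr < 1" using Fpos[OF r] by simp
    qed
    have l1: "\<forall>\<^sub>F m in sequentially. real m * qR ^ (m - 1) < 1"
      by (rule order_tendstoD(2)[OF n_pow_lim[OF qR]]) simp
    have l2: "\<forall>\<^sub>F m in sequentially. H * (real m * qr ^ (m - 1)) < eps"
      by (rule order_tendstoD(2)[OF tendsto_mult_right_zero[OF n_pow_lim[OF qr]] eps])
    have l3: "\<forall>\<^sub>F m in sequentially. 2 \<le> m" by (rule eventually_ge_at_top)
    have "\<forall>\<^sub>F m in sequentially. norm ((\<integral>\<omega>. \<bar>\<eta> (NN m \<omega>) - \<eta> x\<bar> \<partial>M) - 0) < e"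
      using l1 l2 l3
    proof eventually_elim
      case (elim m)
      have nn: "is_nearest_neighbor M Xs x m (NN m)" using assms(8) elim(3) by simp
      have bnd: "(\<integral>\<omega>. h (NN m \<omega>) \<partial>M) \<le> eps * (1 + K) + eps * m * qR ^ (m - 1) + H * m * qr ^ (m - 1)"
        unfolding qR_def qr_def
        by (rule total_bound[OF elim(3) _ _ less_imp_le[OF eps] r gle K sph])
           (use nn in \<open>auto simp: is_nearest_neighbor_def\<close>)
      have "eps * m * qR ^ (m - 1) \<le> eps" using elim(1) eps
        by (simp add: mult.assoc mult_left_le)
      moreover have "H * m * qr ^ (m - 1) < eps" using elim(2) by (simp add: mult.assoc)
      ultimately have "(\<integral>\<omega>. h (NN m \<omega>) \<partial>M) < eps * (K + 3)" using bnd by (simp add: algebra_simps)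
      moreover have "0 \<le> (\<integral>\<omega>. h (NN m \<omega>) \<partial>M)"
        by (rule Bochner_Integration.integral_nonneg) (simp add: h_nonneg)
      ultimately show ?case using eps_e by (simp add: h_def)
    qed
    then show "\<exists>no. \<forall>n\<ge>no. norm ((\<integral>\<omega>. \<bar>\<eta> (NN n \<omega>) - \<eta> x\<bar> \<partial>M) - 0) < e"
      by (simp add: eventually_sequentially)
  qed
qed

end
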